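(* For every integer $m\ge0$ and every odd positive integer $k$, \[ \sum_{i=0}^{2m}(-1)^i\binom{m+i}{m-i}\binom{m+k-i}{m-k+i}=0 . \]
   Context: Binomial coefficients $\binom{a}{b}$ are taken to be $0$ when $b<0$ or $b>a$ (in particular, whenever the lower index is negative). *)

theory Defs
  imports Main
begin

definition binomz :: "int \<Rightarrow> int \<Rightarrow> int" where
  "binomz a b = (if 0 \<le> b \<and> b \<le> a then int (nat a choose nat b) else 0)"

end

theory Submission
  imports Defs
begin

theorem mainTheorem14:
  fixes m k :: nat
  assumes "odd k"
  shows "(\<Sum>i=0..2*m. (-1::int)^i * binomz (int m + int i) (int m - int i)
            * binomz (int m + int k - int i) (int m - int k + int i)) = 0"
proof -
  define A where "A x = binomz (int m + x) (int m - x)" for x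
  define f where "f i = (-1::int)^i * A (int i) * A (int k - int i)" for i
  have fe: "\<And>i. (-1::int)^i * binomz (int m + int i) (int m - int i)
            * binomz (int m + int k - int i) (int m - int k + int i) = f i"
    by (simp add: f_def A_def algebra_simps)
  have A0: "A x = 0" if "x < 0 \<or> x > int m" for x
    using that by (auto simp: A_def binomz_def)
  have s1: "sum f {0..2*m} = sum f {0..2*m+k}"
    by (rule sum.mono_neutral_left) (auto simp: f_def A0)
  have s2: "sum f {0..2*m+k} = sum f {0..k}"
    by (rule sum.mono_neutral_right) (auto simp: f_def A0)
  have neg: "f (k - i) = - f i" if "i \<le> k" for i
  proof -
    have "(-1::int)^(k-i) * (-1)^i = (-1)^k" using that
      by (simp add: power_add[symmetric])
    also have "\<dots> = -1" using assms by simp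
    finally have "(-1::int)^(k-i) = - ((-1)^i)"
      by (metis minus_one_mult_self mult.assoc mult_minus_left mult_1)
    thus ?thesis using that by (simp add: f_def of_nat_diff)
  qed
  have "sum f {0..k} = sum (\<lambda>i. f (k + 0 - i)) {0..k}"
    by (rule sum.atLeastAtMost_rev)
  also have "\<dots> = - sum f {0..k}"
    by (simp add: neg sum_negf)
  finally have "sum f {0..k} = 0" by simp
  thus ?thesis using s1 s2 fe by simp
qed

end
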